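(* Let $(Q,\mathcal Q)$, $(\Delta,\mathcal D)$ be measurable spaces, $f:Q\to Q$ and $g:Q\to\Delta$ measurable, and let $T$ be the generator with $T(x,\cdot)=\delta_{(f(x),g(f(x)))}$ (i.e. $T(x,A\times B)=1$ if $f(x)\in A$ and $g(f(x))\in B$, and $0$ otherwise). Then for $x_1,x_2\in Q$ the following are equivalent: (i) $G_T(\delta_{x_1})=G_T(\delta_{x_2})$; (ii) $T(x_1,C)=T(x_2,C)$ for all $C\in\sigma_Q(T)\otimes\mathcal D$.
   Context: A generator $[(Q,\mathcal Q),T,(\Delta,\mathcal D)]$ consists of measurable spaces $(Q,\mathcal Q)$ and $(\Delta,\mathcal D)$ and a Markov transition kernel $T$ from $(Q,\mathcal Q)$ to $(Q\times\Delta,\mathcal Q\otimes\mathcal D)$. For a probability measure $\mu$ on $(Q,\mathcal Q)$, $G_T(\mu)$ is the unique probability measure on $(\Delta^{\mathbb N},\mathcal D^{\mathbb N})$ whose finite-dimensional marginals are $P_n^{\mu,T}(B_1\times\cdots\times B_n):=\int_Q\int_{Q\times B_1}\cdots\int_{Q\times B_n}T(x_{n-1},d(x_n,y_n))\cdots T(x_0,d(x_1,y_1))\,\mu(dx_0)$; $\delta_x$ is the Dirac measure at $x$. $\sigma_Q(T)$ denotes the smallest $\sigma$-subalgebra $\mathcal A$ of $\mathcal Q$ such that for every $C\in\mathcal A\otimes\mathcal D$ the function $x\mapsto T(x,C)$ is $\mathcal A$-measurable. *)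

theory Defs
  imports "HOL-Probability.Probability"
begin

definition is_generator :: "'q measure \<Rightarrow> ('q \<Rightarrow> ('q \<times> 'd) measure) \<Rightarrow> 'd measure \<Rightarrow> bool" where
  "is_generator Q T D \<longleftrightarrow> T \<in> Q \<rightarrow>\<^sub>M prob_algebra (Q \<Otimes>\<^sub>M D)"

text \<open>Iterated integral: W n B x = probability, starting in state x, that y_1 in B 0, ..., y_n in B (n-1).
  The outermost integral is w.r.t. T(x_0, d(x_1,y_1)) over Q x B_1, as in P_n.\<close>
primrec gen_W :: "'q set \<Rightarrow> ('q \<Rightarrow> ('q \<times> 'd) measure) \<Rightarrow> nat \<Rightarrow> (nat \<Rightarrow> 'd set) \<Rightarrow> 'q \<Rightarrow> ennreal" where
  "gen_W S T 0 B x = 1"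
| "gen_W S T (Suc n) B x =
     (\<integral>\<^sup>+ z. indicator (S \<times> B 0) z * gen_W S T n (\<lambda>i. B (Suc i)) (fst z) \<partial>(T x))"

text \<open>Finite-dimensional marginal P_n^{mu,T}(B_1 x ... x B_n) (index shifted: B i stands for B_{i+1}).\<close>
definition gen_P :: "'q measure \<Rightarrow> ('q \<Rightarrow> ('q \<times> 'd) measure) \<Rightarrow> 'q measure \<Rightarrow> nat \<Rightarrow> (nat \<Rightarrow> 'd set) \<Rightarrow> ennreal" where
  "gen_P Q T \<mu> n B = (\<integral>\<^sup>+ x. gen_W (space Q) T n B x \<partial>\<mu>)"

definition G_T :: "'q measure \<Rightarrow> ('q \<Rightarrow> ('q \<times> 'd) measure) \<Rightarrow> 'd measure \<Rightarrow> 'q measure \<Rightarrow> (nat \<Rightarrow> 'd) measure" where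
  "G_T Q T D \<mu> = (THE P. prob_space P \<and> sets P = sets (\<Pi>\<^sub>M i\<in>(UNIV::nat set). D) \<and>
      (\<forall>n B. (\<forall>i<n. B i \<in> sets D) \<longrightarrow>
         emeasure P {\<omega> \<in> space (\<Pi>\<^sub>M i\<in>(UNIV::nat set). D). \<forall>i<n. \<omega> i \<in> B i} = gen_P Q T \<mu> n B))"

definition sigma_admissible :: "'q measure \<Rightarrow> ('q \<Rightarrow> ('q \<times> 'd) measure) \<Rightarrow> 'd measure \<Rightarrow> 'q set set \<Rightarrow> bool" where
  "sigma_admissible Q T D A \<longleftrightarrow> sigma_algebra (space Q) A \<and> A \<subseteq> sets Q \<and>
     (\<forall>C \<in> sets (sigma (space Q) A \<Otimes>\<^sub>M D).
        (\<lambda>x. emeasure (T x) C) \<in> borel_measurable (sigma (space Q) A))"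

definition sigma_Q :: "'q measure \<Rightarrow> ('q \<Rightarrow> ('q \<times> 'd) measure) \<Rightarrow> 'd measure \<Rightarrow> 'q set set" where
  "sigma_Q Q T D = (THE A. sigma_admissible Q T D A \<and> (\<forall>A'. sigma_admissible Q T D A' \<longrightarrow> A \<subseteq> A'))"

end

theory Submission
  imports Defs
begin

lemma agree_sigma_sets:
  assumes "x \<in> \<Omega>" "y \<in> \<Omega>" "\<And>S. S \<in> G \<Longrightarrow> (x \<in> S \<longleftrightarrow> y \<in> S)" "S \<in> sigma_sets \<Omega> G"
  shows "x \<in> S \<longleftrightarrow> y \<in> S"
  using assms(4)
proof induction
  case (Basic a) then show ?case using assms(3) by blast
next
  case Empty then show ?case by simp
next
  case (Compl a) then show ?case using assms(1,2) by blast
next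
  case (Union a) then show ?case by blast
qed

locale detgen =
  fixes Q :: "'q measure" and D :: "'d measure"
    and f :: "'q \<Rightarrow> 'q" and g :: "'q \<Rightarrow> 'd" and T :: "'q \<Rightarrow> ('q \<times> 'd) measure"
  assumes f: "f \<in> Q \<rightarrow>\<^sub>M Q" and g: "g \<in> Q \<rightarrow>\<^sub>M D"
    and T_def: "\<And>x. T x = return (Q \<Otimes>\<^sub>M D) (f x, g (f x))"
begin

definition "h x = (f x, g (f x))"
definition "S n B = {x \<in> space Q. g ((f ^^ Suc n) x) \<in> B}"
definition "G = {S n B | n B. B \<in> sets D}"
definition "A0 = sigma_sets (space Q) G"
definition "\<omega> x = (\<lambda>i. g ((f ^^ Suc i) x))"

lemma f_space: "x \<in> space Q \<Longrightarrow> f x \<in> space Q"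
  by (rule measurable_space[OF f])

lemma g_space: "x \<in> space Q \<Longrightarrow> g x \<in> space D"
  by (rule measurable_space[OF g])

lemma fn_space: "x \<in> space Q \<Longrightarrow> (f ^^ n) x \<in> space Q"
  by (induction n) (auto simp: f_space)

lemma G_Pow: "G \<subseteq> Pow (space Q)"
  unfolding G_def S_def by auto

lemma sets_A0_sigma:
  "sets (sigma (space Q) A0) = A0"
proof -
  have "sigma_algebra (space Q) A0" unfolding A0_def using G_Pow
    by (simp add: sigma_algebra_sigma_sets)
  then show ?thesis by (rule sigma_algebra.sets_measure_of_eq)
qed

lemma sets_Msig: "sets (sigma (space Q) G) = A0"
  using G_Pow unfolding A0_def by (simp add: sets_measure_of_conv)

lemma T_emeasure:
  assumes "sigma_algebra (space Q) A" "A \<subseteq> sets Q" "C \<in> sets (sigma (space Q) A \<Otimes>\<^sub>M D)"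
  shows "emeasure (T x) C = indicator C (h x)"
proof -
  have "sets (sigma (space Q) A) = A"
    using assms(1) by (rule sigma_algebra.sets_measure_of_eq)
  then have "sets (sigma (space Q) A \<Otimes>\<^sub>M D) \<subseteq> sets (Q \<Otimes>\<^sub>M D)"
    unfolding sets_pair_measure space_measure_of_conv using assms(2)
    by (intro sigma_sets_mono') auto
  then have "C \<in> sets (Q \<Otimes>\<^sub>M D)" using assms(3) by (rule subsetD)
  then show ?thesis by (simp add: T_def h_def)
qed

lemma admissible_iff:
  "sigma_admissible Q T D A \<longleftrightarrow> sigma_algebra (space Q) A \<and> A \<subseteq> sets Q \<and>
     (\<forall>C \<in> sets (sigma (space Q) A \<Otimes>\<^sub>M D). h -` C \<inter> space Q \<in> A)"
proof -
  { assume sa: "sigma_algebra (space Q) A" and sub: "A \<subseteq> sets Q"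
    have sA: "sets (sigma (space Q) A) = A"
      using sa by (rule sigma_algebra.sets_measure_of_eq)
    have "(\<lambda>x. emeasure (T x) C) \<in> borel_measurable (sigma (space Q) A) \<longleftrightarrow> h -` C \<inter> space Q \<in> A"
      if "C \<in> sets (sigma (space Q) A \<Otimes>\<^sub>M D)" for C
    proof -
      have "(\<lambda>x. emeasure (T x) C) = indicator (h -` C)"
        using T_emeasure[OF sa sub that] by (auto simp: fun_eq_iff indicator_def)
      then show ?thesis
        by (simp add: borel_measurable_indicator_iff sA space_measure_of_conv)
    qed }
  then show ?thesis unfolding sigma_admissible_def by blast
qed

lemma A0_admissible: "sigma_admissible Q T D A0"
proof -
  have sa: "sigma_algebra (space Q) A0" unfolding A0_def using G_Pow
    by (simp add: sigma_algebra_sigma_sets)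
  have sub: "A0 \<subseteq> sets Q"
  proof -
    have "G \<subseteq> sets Q"
    proof
      fix X assume "X \<in> G"
      then obtain n B where X: "X = S n B" "B \<in> sets D" unfolding G_def by blast
      have "(g \<circ> (f ^^ Suc n)) \<in> Q \<rightarrow>\<^sub>M D"
        using measurable_comp[OF measurable_compose_n[OF f] g] .
      then have "(g \<circ> (f ^^ Suc n)) -` B \<inter> space Q \<in> sets Q"
        using X(2) by (rule measurable_sets)
      moreover have "(g \<circ> (f ^^ Suc n)) -` B \<inter> space Q = X"
        unfolding X S_def by auto
      ultimately show "X \<in> sets Q" by simp
    qed
    then show ?thesis unfolding A0_def
      by (rule sigma_algebra.sigma_sets_subset[OF sets.sigma_algebra_axioms])
  qed
  define M where "M = sigma (space Q) G"
  have spM: "space M = space Q" unfolding M_def by (simp add: space_measure_of_conv)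
  have sM: "sets M = A0" unfolding M_def by (rule sets_Msig)
  have fM: "f \<in> M \<rightarrow>\<^sub>M M"
    unfolding M_def
  proof (rule measurable_measure_of[OF G_Pow])
    show "f \<in> space (sigma (space Q) G) \<rightarrow> space Q"
      using f_space by (auto simp: space_measure_of_conv)
    fix y assume "y \<in> G"
    then obtain n B where y: "y = S n B" "B \<in> sets D" unfolding G_def by blast
    have "f -` y \<inter> space (sigma (space Q) G) = S (Suc n) B"
      unfolding y S_def by (auto simp: space_measure_of_conv f_space funpow_Suc_right simp del: funpow.simps)
    also have "\<dots> \<in> G" unfolding G_def using y by blast
    finally show "f -` y \<inter> space (sigma (space Q) G) \<in> sets (sigma (space Q) G)"
      using sets_Msig A0_def by auto
  qed
  have gM: "(\<lambda>x. g (f x)) \<in> M \<rightarrow>\<^sub>M D"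
  proof (rule measurableI)
    fix x assume "x \<in> space M" then show "g (f x) \<in> space D"
      using spM f_space g_space by auto
  next
    fix B assume "B \<in> sets D"
    then have "S 0 B \<in> A0" unfolding A0_def G_def by blast
    moreover have "(\<lambda>x. g (f x)) -` B \<inter> space M = S 0 B"
      unfolding spM S_def by auto
    ultimately show "(\<lambda>x. g (f x)) -` B \<inter> space M \<in> sets M" using sM by simp
  qed
  have hM: "h \<in> M \<rightarrow>\<^sub>M M \<Otimes>\<^sub>M D"
    unfolding h_def[abs_def] using fM gM by (rule measurable_Pair)
  have "\<forall>C \<in> sets (sigma (space Q) A0 \<Otimes>\<^sub>M D). h -` C \<inter> space Q \<in> A0"
  proof
    fix C assume "C \<in> sets (sigma (space Q) A0 \<Otimes>\<^sub>M D)"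
    moreover have "sets (sigma (space Q) A0 \<Otimes>\<^sub>M D) = sets (M \<Otimes>\<^sub>M D)"
      using sets_A0_sigma sM by (intro sets_pair_measure_cong) auto
    ultimately have "C \<in> sets (M \<Otimes>\<^sub>M D)" by simp
    from measurable_sets[OF hM this] show "h -` C \<inter> space Q \<in> A0" using spM sM by simp
  qed
  then show ?thesis using sa sub admissible_iff by blast
qed

lemma A0_minimal:
  assumes "sigma_admissible Q T D A"
  shows "A0 \<subseteq> A"
proof -
  have sa: "sigma_algebra (space Q) A" and sub: "A \<subseteq> sets Q"
    and pre: "\<And>C. C \<in> sets (sigma (space Q) A \<Otimes>\<^sub>M D) \<Longrightarrow> h -` C \<inter> space Q \<in> A"
    using assms admissible_iff by auto
  have sA: "sets (sigma (space Q) A) = A"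
    using sa by (rule sigma_algebra.sets_measure_of_eq)
  have spA: "space (sigma (space Q) A) = space Q" by (simp add: space_measure_of_conv)
  have "S n B \<in> A" if "B \<in> sets D" for n B
  proof (induction n)
    case 0
    have "space Q \<times> B \<in> sets (sigma (space Q) A \<Otimes>\<^sub>M D)"
      using that sets.top[of "sigma (space Q) A"] spA by (intro pair_measureI) auto
    from pre[OF this] have "h -` (space Q \<times> B) \<inter> space Q \<in> A" .
    moreover have "h -` (space Q \<times> B) \<inter> space Q = S 0 B"
      unfolding h_def S_def using f_space by auto
    ultimately show ?case by simp
  next
    case (Suc n)
    have "S n B \<times> space D \<in> sets (sigma (space Q) A \<Otimes>\<^sub>M D)"
      using Suc sA by (intro pair_measureI) auto
    from pre[OF this] have "h -` (S n B \<times> space D) \<inter> space Q \<in> A" .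
    moreover have "h -` (S n B \<times> space D) \<inter> space Q = S (Suc n) B"
      unfolding h_def S_def using f_space g_space
      by (auto simp: funpow_Suc_right simp del: funpow.simps)
    ultimately show ?case by simp
  qed
  then have "G \<subseteq> A" unfolding G_def by blast
  then show ?thesis unfolding A0_def by (rule sigma_algebra.sigma_sets_subset[OF sa])
qed

lemma sigma_Q_eq: "sigma_Q Q T D = A0"
  unfolding sigma_Q_def
proof (rule the_equality)
  show "sigma_admissible Q T D A0 \<and> (\<forall>A'. sigma_admissible Q T D A' \<longrightarrow> A0 \<subseteq> A')"
    using A0_admissible A0_minimal by blast
next
  fix A assume "sigma_admissible Q T D A \<and> (\<forall>A'. sigma_admissible Q T D A' \<longrightarrow> A \<subseteq> A')"
  then show "A = A0" using A0_admissible A0_minimal by blast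
qed

lemma cyl_sets:
  fixes n :: nat
  assumes "\<And>i. i < n \<Longrightarrow> \<phi> i \<in> M \<rightarrow>\<^sub>M D" "\<And>i. i < n \<Longrightarrow> B i \<in> sets D"
  shows "{z \<in> space M. \<forall>i<n. \<phi> i z \<in> B i} \<in> sets M"
proof -
  have "{z \<in> space M. \<forall>i\<in>{..<n}. \<phi> i z \<in> B i} \<in> sets M"
  proof (rule sets.sets_Collect_finite_All)
    fix i assume "i \<in> {..<n}"
    then have "\<phi> i -` B i \<inter> space M \<in> sets M"
      using measurable_sets[OF assms(1) assms(2)] by simp
    moreover have "\<phi> i -` B i \<inter> space M = {z \<in> space M. \<phi> i z \<in> B i}" by auto
    ultimately show "{z \<in> space M. \<phi> i z \<in> B i} \<in> sets M" by metis
  qed (rule finite_lessThan)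
  then show ?thesis unfolding Ball_def lessThan_iff .
qed

lemma fn_meas: "(\<lambda>y. g ((f ^^ n) y)) \<in> Q \<rightarrow>\<^sub>M D"
  using measurable_comp[OF measurable_compose_n[OF f] g] unfolding comp_def .

lemma gen_W_eq:
  assumes "x \<in> space Q" "\<And>i. i < n \<Longrightarrow> B i \<in> sets D"
  shows "gen_W (space Q) T n B x = indicator {y \<in> space Q. \<forall>i<n. g ((f ^^ Suc i) y) \<in> B i} x"
  using assms
proof (induction n arbitrary: B x)
  case 0
  then show ?case by simp
next
  case (Suc n)
  define \<psi> where "\<psi> i z = (case i of 0 \<Rightarrow> snd z | Suc j \<Rightarrow> g ((f ^^ Suc j) (fst z)))" for i and z :: "'q \<times> 'd"
  define E where "E = {z \<in> space (Q \<Otimes>\<^sub>M D). \<forall>i<Suc n. \<psi> i z \<in> B i}"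
  have psi_meas: "\<psi> i \<in> Q \<Otimes>\<^sub>M D \<rightarrow>\<^sub>M D" for i
  proof (cases i)
    case 0 then show ?thesis unfolding \<psi>_def by simp
  next
    case (Suc j)
    have "(\<lambda>z. g ((f ^^ Suc j) (fst z))) \<in> Q \<Otimes>\<^sub>M D \<rightarrow>\<^sub>M D"
      using measurable_comp[OF measurable_fst fn_meas[of "Suc j"]] by (simp add: comp_def)
    then show ?thesis unfolding \<psi>_def Suc by simp
  qed
  have E: "E \<in> sets (Q \<Otimes>\<^sub>M D)"
    unfolding E_def by (rule cyl_sets[OF psi_meas Suc.prems(2)])
  have "gen_W (space Q) T (Suc n) B x =
      (\<integral>\<^sup>+ z. indicator (space Q \<times> B 0) z * gen_W (space Q) T n (\<lambda>i. B (Suc i)) (fst z) \<partial>(T x))"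
    by simp
  also have "\<dots> = (\<integral>\<^sup>+ z. indicator E z \<partial>(T x))"
  proof (rule nn_integral_cong)
    fix z assume "z \<in> space (T x)"
    then have z: "z \<in> space (Q \<Otimes>\<^sub>M D)" by (simp add: T_def)
    then have fz: "fst z \<in> space Q" by (auto simp: space_pair_measure)
    have "gen_W (space Q) T n (\<lambda>i. B (Suc i)) (fst z) =
        indicator {y \<in> space Q. \<forall>i<n. g ((f ^^ Suc i) y) \<in> B (Suc i)} (fst z)"
      using Suc.prems(2) fz by (intro Suc.IH) auto
    moreover have "z \<in> E \<longleftrightarrow> z \<in> space Q \<times> B 0 \<and>
        fst z \<in> {y \<in> space Q. \<forall>i<n. g ((f ^^ Suc i) y) \<in> B (Suc i)}"
    proof -
      have "z \<in> E \<longleftrightarrow> (\<forall>i<Suc n. \<psi> i z \<in> B i)" unfolding E_def using z by simp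
      also have "\<dots> \<longleftrightarrow> snd z \<in> B 0 \<and> (\<forall>i<n. g ((f ^^ Suc i) (fst z)) \<in> B (Suc i))"
        unfolding All_less_Suc2 \<psi>_def by simp
      also have "\<dots> \<longleftrightarrow> z \<in> space Q \<times> B 0 \<and>
          fst z \<in> {y \<in> space Q. \<forall>i<n. g ((f ^^ Suc i) y) \<in> B (Suc i)}"
        using fz by (cases z) simp
      finally show ?thesis .
    qed
    ultimately show "indicator (space Q \<times> B 0) z * gen_W (space Q) T n (\<lambda>i. B (Suc i)) (fst z) = indicator E z"
      unfolding indicator_def by simp
  qed
  also have "\<dots> = emeasure (T x) E"
    using E by (simp add: T_def)
  also have "\<dots> = indicator E (h x)"
    using E by (simp add: T_def h_def)
  also have "\<dots> = indicator {y \<in> space Q. \<forall>i<Suc n. g ((f ^^ Suc i) y) \<in> B i} x"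
  proof -
    have hx: "h x \<in> space (Q \<Otimes>\<^sub>M D)"
      using Suc.prems(1) f_space g_space unfolding h_def by (simp add: space_pair_measure)
    have "h x \<in> E \<longleftrightarrow> (\<forall>i<Suc n. \<psi> i (h x) \<in> B i)" unfolding E_def using hx by simp
    also have "\<dots> \<longleftrightarrow> g (f x) \<in> B 0 \<and> (\<forall>i<n. g ((f ^^ Suc i) (f x)) \<in> B (Suc i))"
      unfolding All_less_Suc2 \<psi>_def h_def by simp
    also have "\<dots> \<longleftrightarrow> (\<forall>i<Suc n. g ((f ^^ Suc i) x) \<in> B i)"
      unfolding All_less_Suc2 by (simp only: funpow_Suc_right comp_def funpow_0)
    also have "\<dots> \<longleftrightarrow> x \<in> {y \<in> space Q. \<forall>i<Suc n. g ((f ^^ Suc i) y) \<in> B i}"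
      using Suc.prems(1) by simp
    finally show ?thesis unfolding indicator_def by simp
  qed
  finally show ?case .
qed

definition "MD = (\<Pi>\<^sub>M i\<in>(UNIV::nat set). D)"

lemma cyl_MD:
  assumes "\<And>i. i < n \<Longrightarrow> B i \<in> sets D"
  shows "{z \<in> space MD. \<forall>i<n. z i \<in> B i} \<in> sets MD"
  unfolding MD_def
proof (rule cyl_sets)
  fix i assume "i < n"
  show "(\<lambda>z. z i) \<in> (\<Pi>\<^sub>M i\<in>(UNIV::nat set). D) \<rightarrow>\<^sub>M D"
    by (rule measurable_component_singleton) (rule UNIV_I)
  show "B i \<in> sets D" by (rule assms) fact
qed

lemma omega_space: "x \<in> space Q \<Longrightarrow> \<omega> x \<in> space MD"
  unfolding MD_def \<omega>_def by (auto simp: space_PiM g_space fn_space f_space)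

lemma gen_P_return:
  assumes "x \<in> space Q" "\<And>i. i < n \<Longrightarrow> B i \<in> sets D"
  shows "gen_P Q T (return Q x) n B = indicator {y \<in> space Q. \<forall>i<n. g ((f ^^ Suc i) y) \<in> B i} x"
proof -
  let ?X = "{y \<in> space Q. \<forall>i<n. g ((f ^^ Suc i) y) \<in> B i}"
  have X: "?X \<in> sets Q"
  proof (rule cyl_sets)
    fix i assume "i < n"
    show "(\<lambda>y. g ((f ^^ Suc i) y)) \<in> Q \<rightarrow>\<^sub>M D" by (rule fn_meas)
    show "B i \<in> sets D" by (rule assms(2)) fact
  qed
  have "gen_P Q T (return Q x) n B = (\<integral>\<^sup>+ y. indicator ?X y \<partial>return Q x)"
    unfolding gen_P_def using assms(2) by (intro nn_integral_cong gen_W_eq) auto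
  also have "\<dots> = emeasure (return Q x) ?X"
    by (rule nn_integral_indicator) (simp only: sets_return X)
  also have "\<dots> = indicator ?X x" by (rule emeasure_return[OF X])
  finally show ?thesis .
qed

lemma MD_space_D: "z \<in> space MD \<Longrightarrow> z i \<in> space D"
  unfolding MD_def by (auto simp: space_PiM)

lemma prod_emb_mem:
  "z \<in> prod_emb UNIV (\<lambda>_. D) J (Pi\<^sub>E J A) \<longleftrightarrow> z \<in> space MD \<and> (\<forall>i\<in>J. z i \<in> A i)"
  unfolding MD_def prod_emb_iff space_PiM restrict_PiE_iff PiE_UNIV_domain extensional_UNIV
  by (auto simp add: Pi_iff)

lemma marg_return:
  assumes x: "x \<in> space Q" and B: "\<forall>i<n. B i \<in> sets D"
  shows "emeasure (return MD (\<omega> x)) {z \<in> space MD. \<forall>i<n. z i \<in> B i} = gen_P Q T (return Q x) n B"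
proof -
  have "emeasure (return MD (\<omega> x)) {z \<in> space MD. \<forall>i<n. z i \<in> B i} =
      indicator {z \<in> space MD. \<forall>i<n. z i \<in> B i} (\<omega> x)"
    by (rule emeasure_return[OF cyl_MD]) (use B in auto)
  also have "\<dots> = indicator {y \<in> space Q. \<forall>i<n. g ((f ^^ Suc i) y) \<in> B i} x"
    unfolding indicator_def using omega_space[OF x] x by (simp add: \<omega>_def del: funpow.simps)
  also have "\<dots> = gen_P Q T (return Q x) n B"
    using gen_P_return[OF x, of n B] B by simp
  finally show ?thesis .
qed

lemma G_T_return:
  assumes x: "x \<in> space Q"
  shows "G_T Q T D (return Q x) = return MD (\<omega> x)"
  unfolding G_T_def MD_def[symmetric]
proof (rule the_equality)
  show "prob_space (return MD (\<omega> x)) \<and> sets (return MD (\<omega> x)) = sets MD \<and>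
    (\<forall>n B. (\<forall>i<n. B i \<in> sets D) \<longrightarrow>
      emeasure (return MD (\<omega> x)) {z \<in> space MD. \<forall>i<n. z i \<in> B i} = gen_P Q T (return Q x) n B)"
  proof (intro conjI allI impI)
    show "prob_space (return MD (\<omega> x))" by (rule prob_space_return[OF omega_space[OF x]])
    show "sets (return MD (\<omega> x)) = sets MD" by (rule sets_return)
    fix n :: nat and B assume "\<forall>i<n. B i \<in> sets D"
    then show "emeasure (return MD (\<omega> x)) {z \<in> space MD. \<forall>i<n. z i \<in> B i} = gen_P Q T (return Q x) n B"
      by (rule marg_return[OF x])
  qed
next
  fix P assume P: "prob_space P \<and> sets P = sets MD \<and>
    (\<forall>n B. (\<forall>i<n. B i \<in> sets D) \<longrightarrow>
      emeasure P {z \<in> space MD. \<forall>i<n. z i \<in> B i} = gen_P Q T (return Q x) n B)"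
  have Pm: "emeasure P {z \<in> space MD. \<forall>i<n. z i \<in> B i} = gen_P Q T (return Q x) n B"
    if "\<forall>i<n. B i \<in> sets D" for n B
    using P that by blast
  have sP: "sets P = sets MD" using P by blast
  show "P = return MD (\<omega> x)"
    unfolding MD_def
  proof (rule measure_eqI_PiM_infinite)
    show "sets P = sets (\<Pi>\<^sub>M i\<in>UNIV. D)" using sP unfolding MD_def .
    show "sets (return (\<Pi>\<^sub>M i\<in>UNIV. D) (\<omega> x)) = sets (\<Pi>\<^sub>M i\<in>UNIV. D)" by (rule sets_return)
    show "finite_measure P" using P prob_space.finite_measure by blast
  next
    fix A J assume J: "finite J" "J \<subseteq> (UNIV::nat set)" and A: "\<And>i. i \<in> J \<Longrightarrow> A i \<in> sets D"
    define n where "n = Suc (Max (insert 0 J))"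
    define B where "B i = (if i \<in> J then A i else space D)" for i
    have Jn: "i \<in> J \<Longrightarrow> i < n" for i
      unfolding n_def using J(1) by (simp add: le_imp_less_Suc)
    have BD: "\<forall>i<n. B i \<in> sets D" unfolding B_def using A by auto
    have eq: "prod_emb UNIV (\<lambda>_. D) J (Pi\<^sub>E J A) = {z \<in> space MD. \<forall>i<n. z i \<in> B i}"
    proof (intro set_eqI iffI)
      fix z assume "z \<in> prod_emb UNIV (\<lambda>_. D) J (Pi\<^sub>E J A)"
      then have "z \<in> space MD \<and> (\<forall>i\<in>J. z i \<in> A i)" using prod_emb_mem[of z J A] by blast
      then have z: "z \<in> space MD" "\<forall>i\<in>J. z i \<in> A i" by blast+
      have "z i \<in> B i" if "i < n" for i
      proof (cases "i \<in> J")
        case True then show ?thesis using z(2) unfolding B_def by simp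
      next
        case False then show ?thesis using MD_space_D[OF z(1), of i] unfolding B_def by simp
      qed
      then show "z \<in> {z \<in> space MD. \<forall>i<n. z i \<in> B i}" using z(1) by blast
    next
      fix z assume z: "z \<in> {z \<in> space MD. \<forall>i<n. z i \<in> B i}"
      then have z1: "z \<in> space MD" and z2: "\<forall>i<n. z i \<in> B i" by blast+
      have "\<forall>i\<in>J. z i \<in> A i"
      proof
        fix i assume iJ: "i \<in> J"
        have "z i \<in> B i" using z2 Jn[OF iJ] by blast
        then show "z i \<in> A i" using iJ unfolding B_def by simp
      qed
      then have "z \<in> space MD \<and> (\<forall>i\<in>J. z i \<in> A i)" using z1 by blast
      then show "z \<in> prod_emb UNIV (\<lambda>_. D) J (Pi\<^sub>E J A)" unfolding prod_emb_mem .
    qed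
    have "emeasure P (prod_emb UNIV (\<lambda>_. D) J (Pi\<^sub>E J A)) = gen_P Q T (return Q x) n B"
      unfolding eq by (rule Pm[OF BD])
    also have "\<dots> = emeasure (return MD (\<omega> x)) (prod_emb UNIV (\<lambda>_. D) J (Pi\<^sub>E J A))"
      unfolding eq by (rule marg_return[OF x BD, symmetric])
    finally show "emeasure P (prod_emb UNIV (\<lambda>_. D) J (Pi\<^sub>E J A)) =
        emeasure (return (\<Pi>\<^sub>M i\<in>UNIV. D) (\<omega> x)) (prod_emb UNIV (\<lambda>_. D) J (Pi\<^sub>E J A))"
      unfolding MD_def .
  qed
qed

lemma omega_0: "\<omega> x 0 = g (f x)"
  unfolding \<omega>_def by simp

lemma omega_f: "\<omega> (f x) i = \<omega> x (Suc i)"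
  unfolding \<omega>_def by (simp only: funpow_Suc_right comp_def)

lemma S_f: "x \<in> space Q \<Longrightarrow> f x \<in> S n B \<longleftrightarrow> \<omega> x (Suc n) \<in> B"
  using f_space[of x] unfolding S_def omega_f[symmetric] by (simp add: \<omega>_def del: funpow.simps)

lemma agree_return:
  assumes x1: "x1 \<in> space Q" and x2: "x2 \<in> space Q"
  shows "return MD (\<omega> x1) = return MD (\<omega> x2) \<longleftrightarrow>
    (\<forall>i B. B \<in> sets D \<longrightarrow> (\<omega> x1 i \<in> B \<longleftrightarrow> \<omega> x2 i \<in> B))"
proof
  assume eq: "return MD (\<omega> x1) = return MD (\<omega> x2)"
  show "\<forall>i B. B \<in> sets D \<longrightarrow> (\<omega> x1 i \<in> B \<longleftrightarrow> \<omega> x2 i \<in> B)"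
  proof (intro allI impI)
    fix i B assume B: "B \<in> sets D"
    let ?Y = "(\<lambda>z. z i) -` B \<inter> space MD"
    have Y: "?Y \<in> sets MD" unfolding MD_def
      by (rule measurable_sets[OF measurable_component_singleton[of i UNIV "\<lambda>_. D", OF UNIV_I] B])
    have "indicator ?Y (\<omega> x1) = (indicator ?Y (\<omega> x2) :: ennreal)"
      using emeasure_return[OF Y, of "\<omega> x1"] emeasure_return[OF Y, of "\<omega> x2"] eq by metis
    then have "\<omega> x1 \<in> ?Y \<longleftrightarrow> \<omega> x2 \<in> ?Y"
      unfolding indicator_def by (auto split: if_splits)
    then show "\<omega> x1 i \<in> B \<longleftrightarrow> \<omega> x2 i \<in> B"
      using omega_space[OF x1] omega_space[OF x2] by blast
  qed
next
  assume ag: "\<forall>i B. B \<in> sets D \<longrightarrow> (\<omega> x1 i \<in> B \<longleftrightarrow> \<omega> x2 i \<in> B)"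
  show "return MD (\<omega> x1) = return MD (\<omega> x2)"
    unfolding MD_def
  proof (rule measure_eqI_PiM_infinite)
    show "sets (return (\<Pi>\<^sub>M i\<in>UNIV. D) (\<omega> x1)) = sets (\<Pi>\<^sub>M i\<in>UNIV. D)" by (rule sets_return)
    show "sets (return (\<Pi>\<^sub>M i\<in>UNIV. D) (\<omega> x2)) = sets (\<Pi>\<^sub>M i\<in>UNIV. D)" by (rule sets_return)
    show "finite_measure (return (\<Pi>\<^sub>M i\<in>UNIV. D) (\<omega> x1))"
      using prob_space_return[OF omega_space[OF x1]] prob_space.finite_measure unfolding MD_def by blast
  next
    fix A J assume J: "finite J" "J \<subseteq> (UNIV::nat set)" and A: "\<And>i. i \<in> J \<Longrightarrow> A i \<in> sets D"
    let ?E = "prod_emb UNIV (\<lambda>_. D) J (Pi\<^sub>E J A)"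
    have E: "?E \<in> sets (\<Pi>\<^sub>M i\<in>UNIV. D)"
      using J A by (intro sets_PiM_I) auto
    have "\<omega> x1 \<in> ?E \<longleftrightarrow> \<omega> x2 \<in> ?E"
      unfolding prod_emb_mem using omega_space[OF x1] omega_space[OF x2] ag A by blast
    then show "emeasure (return (\<Pi>\<^sub>M i\<in>UNIV. D) (\<omega> x1)) ?E = emeasure (return (\<Pi>\<^sub>M i\<in>UNIV. D) (\<omega> x2)) ?E"
      unfolding emeasure_return[OF E] indicator_def by simp
  qed
qed

lemma agree_T:
  assumes x1: "x1 \<in> space Q" and x2: "x2 \<in> space Q"
  shows "(\<forall>C \<in> sets (sigma (space Q) A0 \<Otimes>\<^sub>M D). emeasure (T x1) C = emeasure (T x2) C) \<longleftrightarrow>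
    (\<forall>i B. B \<in> sets D \<longrightarrow> (\<omega> x1 i \<in> B \<longleftrightarrow> \<omega> x2 i \<in> B))"
proof -
  have sa: "sigma_algebra (space Q) A0" and sub: "A0 \<subseteq> sets Q"
    using A0_admissible unfolding admissible_iff by blast+
  have spA: "space (sigma (space Q) A0) = space Q" by (simp add: space_measure_of_conv)
  have "(\<forall>C \<in> sets (sigma (space Q) A0 \<Otimes>\<^sub>M D). emeasure (T x1) C = emeasure (T x2) C) \<longleftrightarrow>
    (\<forall>C \<in> sets (sigma (space Q) A0 \<Otimes>\<^sub>M D). (h x1 \<in> C \<longleftrightarrow> h x2 \<in> C))"
  proof -
    have "emeasure (T x1) C = emeasure (T x2) C \<longleftrightarrow> (h x1 \<in> C \<longleftrightarrow> h x2 \<in> C)"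
      if "C \<in> sets (sigma (space Q) A0 \<Otimes>\<^sub>M D)" for C
      unfolding T_emeasure[OF sa sub that] indicator_def by simp
    then show ?thesis by blast
  qed
  also have "\<dots> \<longleftrightarrow> (\<forall>i B. B \<in> sets D \<longrightarrow> (\<omega> x1 i \<in> B \<longleftrightarrow> \<omega> x2 i \<in> B))"
  proof
    assume H: "\<forall>C \<in> sets (sigma (space Q) A0 \<Otimes>\<^sub>M D). (h x1 \<in> C \<longleftrightarrow> h x2 \<in> C)"
    show "\<forall>i B. B \<in> sets D \<longrightarrow> (\<omega> x1 i \<in> B \<longleftrightarrow> \<omega> x2 i \<in> B)"
    proof (intro allI impI)
      fix i B assume B: "B \<in> sets D"
      show "\<omega> x1 i \<in> B \<longleftrightarrow> \<omega> x2 i \<in> B"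
      proof (cases i)
        case 0
        have "space Q \<times> B \<in> sets (sigma (space Q) A0 \<Otimes>\<^sub>M D)"
          using B sets.top[of "sigma (space Q) A0"] unfolding spA by (rule pair_measureI[rotated])
        then have "h x1 \<in> space Q \<times> B \<longleftrightarrow> h x2 \<in> space Q \<times> B" by (rule bspec[OF H])
        then show ?thesis unfolding 0 omega_0 h_def using f_space[OF x1] f_space[OF x2] by blast
      next
        case (Suc j)
        have SG: "S j B \<in> G" unfolding G_def using B by blast
        have "S j B \<in> A0" unfolding A0_def by (rule sigma_sets.Basic[OF SG])
        then have Sj: "S j B \<in> sets (sigma (space Q) A0)" unfolding sets_A0_sigma .
        have "S j B \<times> space D \<in> sets (sigma (space Q) A0 \<Otimes>\<^sub>M D)"
          using Sj sets.top[of D] by (rule pair_measureI)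
        then have "h x1 \<in> S j B \<times> space D \<longleftrightarrow> h x2 \<in> S j B \<times> space D" by (rule bspec[OF H])
        then have "f x1 \<in> S j B \<longleftrightarrow> f x2 \<in> S j B"
          unfolding h_def using g_space[OF f_space[OF x1]] g_space[OF f_space[OF x2]] by blast
        then show ?thesis unfolding Suc S_f[OF x1] S_f[OF x2] .
      qed
    qed
  next
    assume ag: "\<forall>i B. B \<in> sets D \<longrightarrow> (\<omega> x1 i \<in> B \<longleftrightarrow> \<omega> x2 i \<in> B)"
    have fA0: "f x1 \<in> a \<longleftrightarrow> f x2 \<in> a" if a: "a \<in> A0" for a
    proof (rule agree_sigma_sets[OF f_space[OF x1] f_space[OF x2]])
      fix S' assume "S' \<in> G"
      then obtain n B where S': "S' = S n B" "B \<in> sets D" unfolding G_def by blast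
      show "f x1 \<in> S' \<longleftrightarrow> f x2 \<in> S'" unfolding S'(1) S_f[OF x1] S_f[OF x2] using ag S'(2) by blast
    next
      show "a \<in> sigma_sets (space Q) G" using a unfolding A0_def .
    qed
    show "\<forall>C \<in> sets (sigma (space Q) A0 \<Otimes>\<^sub>M D). (h x1 \<in> C \<longleftrightarrow> h x2 \<in> C)"
    proof
      fix C assume C: "C \<in> sets (sigma (space Q) A0 \<Otimes>\<^sub>M D)"
      have C': "C \<in> sigma_sets (space Q \<times> space D) {a \<times> b | a b. a \<in> A0 \<and> b \<in> sets D}"
        using C unfolding sets_pair_measure spA sets_A0_sigma .
      show "h x1 \<in> C \<longleftrightarrow> h x2 \<in> C"
      proof (rule agree_sigma_sets[OF _ _ _ C'])
        show "h x1 \<in> space Q \<times> space D" unfolding h_def using f_space[OF x1] g_space[OF f_space[OF x1]] by blast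
        show "h x2 \<in> space Q \<times> space D" unfolding h_def using f_space[OF x2] g_space[OF f_space[OF x2]] by blast
      next
        fix R assume "R \<in> {a \<times> b | a b. a \<in> A0 \<and> b \<in> sets D}"
        then obtain a b where R: "R = a \<times> b" "a \<in> A0" "b \<in> sets D" by blast
        have "g (f x1) \<in> b \<longleftrightarrow> g (f x2) \<in> b" using ag R(3) unfolding omega_0[symmetric] by blast
        then show "h x1 \<in> R \<longleftrightarrow> h x2 \<in> R" unfolding R(1) h_def using fA0[OF R(2)] by simp
      qed
    qed
  qed
  finally show ?thesis .
qed

lemma main:
  assumes x1: "x1 \<in> space Q" and x2: "x2 \<in> space Q"
  shows "G_T Q T D (return Q x1) = G_T Q T D (return Q x2) \<longleftrightarrow>
         (\<forall>C \<in> sets (sigma (space Q) (sigma_Q Q T D) \<Otimes>\<^sub>M D). emeasure (T x1) C = emeasure (T x2) C)"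
  unfolding G_T_return[OF x1] G_T_return[OF x2] sigma_Q_eq agree_return[OF x1 x2] agree_T[OF x1 x2] ..

end

theorem corollary4p7:
  fixes Q :: "'q measure" and D :: "'d measure"
    and f :: "'q \<Rightarrow> 'q" and g :: "'q \<Rightarrow> 'd" and T :: "'q \<Rightarrow> ('q \<times> 'd) measure"
    and x1 x2 :: 'q
  assumes f: "f \<in> Q \<rightarrow>\<^sub>M Q" and g: "g \<in> Q \<rightarrow>\<^sub>M D"
    and T_def: "\<And>x. T x = return (Q \<Otimes>\<^sub>M D) (f x, g (f x))"
    and x1: "x1 \<in> space Q" and x2: "x2 \<in> space Q"
  shows "G_T Q T D (return Q x1) = G_T Q T D (return Q x2) \<longleftrightarrow>
         (\<forall>C \<in> sets (sigma (space Q) (sigma_Q Q T D) \<Otimes>\<^sub>M D). emeasure (T x1) C = emeasure (T x2) C)"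
proof -
  interpret detgen Q D f g T
    using f g T_def by unfold_locales
  show ?thesis using main[OF x1 x2] .
qed

end
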